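(* Let $\mathcal{A}\subset\mathbb{R}^n$ be a nonempty compact set, $\Xi\subseteq\mathbb{R}^n$, $V:\mathbb{R}^n\to\mathbb{R}_+$ and $\Psi:\mathbb{R}^n\rightrightarrows\mathbb{R}^n$, and assume one of the following two settings holds: (i) $\Xi$ is nonempty, closed and convex, $\mathcal{A}$ is convex, and $V(y)=\tfrac12\|y-\mathbf{P}_{\mathcal{A}}(y)\|^2$; (ii) $\Xi=\mathbb{R}^n$ and $V$ is continuously differentiable with locally Lipschitz gradient, positive definite and radially unbounded with respect to $\mathcal{A}$. Assume $\Psi$ is SPSP with respect to $V$ on $\Xi$, and that there exists $\beta>0$ such that for all $y\in\Xi$ and all $s\in\Psi(y)$, $$\|s\|^2\le \beta\,\nabla V(y)^T s .$$ Then $\mathcal{A}$ is SPAS for the iterative method $y^+=\mathbf{P}_\Xi[y-\alpha s]$, $s\in\Psi(y)$, with parameter $\alpha>0$.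
   Context: $\|\cdot\|$ is Euclidean; $\mathbf{P}_S$ is the orthogonal projection onto a nonempty closed convex set $S$. For compact $S$ and $r>0$: $\bar B_r(S)=\{x:\|x-\mathbf{P}_S(x)\|\le r\}$, $B_r(S)=\{x:\|x-\mathbf{P}_S(x)\|<r\}$ (distance to $S$). A function $V$ is positive definite w.r.t. a closed set $S$ if $V=0$ on $S$ and $V>0$ off $S$; it is radially unbounded w.r.t. $S$ (on a set $\Xi$) if for every $B\in\mathbb{R}$ there is $r>0$ with $V(x)>B$ for all $x$ (in $\Xi$) outside $\bar B_r(S)$. SPSP: Let $V:\mathbb{R}^n\to\mathbb{R}_+$ be differentiable, positive definite and radially unbounded w.r.t. compact $\mathcal{A}$, and let $\Xi$ strictly contain $\mathcal{A}$ (every point of $\mathcal{A}$ has an open ball around it contained in $\Xi$). $\Psi$ is semiglobally, practically, strictly pseudogradient (SPSP) w.r.t. $V$ on $\Xi$ if there exist $\epsilon\ge0$, $b\ge0$ such that $\nabla V(y)^Ts\ge -b$ for all $y\in\Xi\cap\bar B_\epsilon(\mathcal{A})$, $s\in\Psi(y)$, and for every $\sigma>\epsilon$ there is a continuous $\phi_{\sigma,\epsilon}:\mathbb{R}^n\to\mathbb{R}$, positive on $\Xi\cap(\bar B_\sigma(\mathcal{A})\setminus B_\epsilon(\mathcal{A}))$ and radially unbounded w.r.t. $\mathcal{A}$ on $\Xi$, with $\nabla V(y)^Ts\ge\phi_{\sigma,\epsilon}(y)$ for all $y\in\Xi\cap(\bar B_\sigma(\mathcal{A})\setminus B_\epsilon(\mathcal{A}))$,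 $s\in\Psi(y)$. SPAS (for the iteration with parameter $\alpha$; statements below concern every sequence $(y(t))_{t\in\mathbb{N}}$ with $y(0)\in\Xi$, $y(t+1)=\mathbf{P}_\Xi[y(t)-\alpha s(t)]$, $s(t)\in\Psi(y(t))$): $\mathcal{A}$ is practically stable if for some $\check\rho_s>0$ and every $\rho_s>\check\rho_s$ there exist $\delta>0$ and a nonempty set $P_s\subset(0,\infty)$ such that whenever $\alpha\in P_s$ and $y(0)\in\bar B_\delta(\mathcal{A})\cap\Xi$, $y(t)\in\bar B_{\rho_s}(\mathcal{A})\cap\Xi$ for all $t$. A compact $S$ is uniformly attractive on compact $\Omega$ if for every $\varepsilon>0$ with $\bar B_\varepsilon(S)\cap\Xi\subset\Omega\cap\Xi$ there is $T\in\mathbb{N}$ such that $y(t)\in\bar B_\varepsilon(S)$ whenever $y(0)\in\Omega$ and $t\ge T$. $\mathcal{A}$ is semiglobally practically attractive if for some $\check\rho_a>0$ and all $\sigma>\rho_a>\check\rho_a$ there is a nonempty $P_a\subset(0,\infty)$ such that whenever $\alpha\in P_a$, $\bar B_{\rho_a}(\mathcal{A})$ is uniformly attractive on $\bar B_\sigma(\mathcal{A})$. $\mathcal{A}$ is SPAS (semiglobally practically asymptotically stable) if it is practically stable and semiglobally practically attractive. *)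

theory Defs
  imports "HOL-Analysis.Analysis"
begin

definition cballS :: "real \<Rightarrow> 'a::euclidean_space set \<Rightarrow> 'a set" where
  "cballS r S = {x. infdist x S \<le> r}"

definition ballS :: "real \<Rightarrow> 'a::euclidean_space set \<Rightarrow> 'a set" where
  "ballS r S = {x. infdist x S < r}"

definition gradV :: "('a::euclidean_space \<Rightarrow> real) \<Rightarrow> 'a \<Rightarrow> 'a \<Rightarrow> real" where
  "gradV V y s = frechet_derivative V (at y) s"

definition pos_def_wrt :: "('a::euclidean_space \<Rightarrow> real) \<Rightarrow> 'a set \<Rightarrow> bool" where
  "pos_def_wrt V S \<longleftrightarrow> (\<forall>x\<in>S. V x = 0) \<and> (\<forall>x. x \<notin> S \<longrightarrow> V x > 0)"

definition rad_unb_on :: "('a::euclidean_space \<Rightarrow> real) \<Rightarrow> 'a set \<Rightarrow> 'a set \<Rightarrow> bool" where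
  "rad_unb_on V S X \<longleftrightarrow> (\<forall>B::real. \<exists>r>0. \<forall>x\<in>X. x \<notin> cballS r S \<longrightarrow> V x > B)"

text \<open>SPSP, including the standing assumptions on V, A and Xi of the definition.\<close>
definition SPSP :: "('a::euclidean_space \<Rightarrow> 'a set) \<Rightarrow> ('a \<Rightarrow> real) \<Rightarrow> 'a set \<Rightarrow> 'a set \<Rightarrow> bool" where
  "SPSP Psi V Xi A \<longleftrightarrow>
     (\<forall>y. V differentiable (at y)) \<and> (\<forall>y. V y \<ge> 0) \<and>
     pos_def_wrt V A \<and> rad_unb_on V A UNIV \<and> compact A \<and>
     (\<forall>a\<in>A. \<exists>e>0. ball a e \<subseteq> Xi) \<and>
     (\<exists>eps\<ge>0. \<exists>b\<ge>0.
        (\<forall>y\<in>Xi \<inter> cballS eps A. \<forall>s\<in>Psi y. gradV V y s \<ge> - b) \<and>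
        (\<forall>sigma>eps. \<exists>phi :: 'a \<Rightarrow> real.
            continuous_on UNIV phi \<and>
            (\<forall>y\<in>Xi \<inter> (cballS sigma A - ballS eps A). phi y > 0) \<and>
            rad_unb_on phi A Xi \<and>
            (\<forall>y\<in>Xi \<inter> (cballS sigma A - ballS eps A). \<forall>s\<in>Psi y. gradV V y s \<ge> phi y)))"

definition traj :: "'a set \<Rightarrow> ('a::euclidean_space \<Rightarrow> 'a set) \<Rightarrow> real \<Rightarrow> (nat \<Rightarrow> 'a) \<Rightarrow> bool" where
  "traj Xi Psi alpha y \<longleftrightarrow> y 0 \<in> Xi \<and>
     (\<forall>t. \<exists>s\<in>Psi (y t). y (Suc t) = closest_point Xi (y t - alpha *\<^sub>R s))"

definition pract_stable :: "'a set \<Rightarrow> ('a::euclidean_space \<Rightarrow> 'a set) \<Rightarrow> 'a set \<Rightarrow> bool" where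
  "pract_stable Xi Psi A \<longleftrightarrow>
     (\<exists>rc>0. \<forall>rs>rc. \<exists>delta>0. \<exists>Ps. Ps \<noteq> {} \<and> Ps \<subseteq> {0<..} \<and>
        (\<forall>alpha\<in>Ps. \<forall>y. traj Xi Psi alpha y \<and> y 0 \<in> cballS delta A \<inter> Xi \<longrightarrow>
            (\<forall>t. y t \<in> cballS rs A \<inter> Xi)))"

definition unif_attractive :: "'a set \<Rightarrow> ('a::euclidean_space \<Rightarrow> 'a set) \<Rightarrow> real \<Rightarrow> 'a set \<Rightarrow> 'a set \<Rightarrow> bool" where
  "unif_attractive Xi Psi alpha S Omega \<longleftrightarrow>
     (\<forall>e>0. cballS e S \<inter> Xi \<subseteq> Omega \<inter> Xi \<longrightarrow>
        (\<exists>T::nat. \<forall>y. traj Xi Psi alpha y \<and> y 0 \<in> Omega \<longrightarrow> (\<forall>t\<ge>T. y t \<in> cballS e S)))"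

definition semiglob_pract_attractive :: "'a set \<Rightarrow> ('a::euclidean_space \<Rightarrow> 'a set) \<Rightarrow> 'a set \<Rightarrow> bool" where
  "semiglob_pract_attractive Xi Psi A \<longleftrightarrow>
     (\<exists>rc>0. \<forall>ra sigma. rc < ra \<and> ra < sigma \<longrightarrow>
        (\<exists>Pa. Pa \<noteq> {} \<and> Pa \<subseteq> {0<..} \<and>
           (\<forall>alpha\<in>Pa. unif_attractive Xi Psi alpha (cballS ra A) (cballS sigma A))))"

definition SPAS :: "'a set \<Rightarrow> ('a::euclidean_space \<Rightarrow> 'a set) \<Rightarrow> 'a set \<Rightarrow> bool" where
  "SPAS Xi Psi A \<longleftrightarrow> pract_stable Xi Psi A \<and> semiglob_pract_attractive Xi Psi A"

end

theory Submission
  imports Defs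
begin


lemma cballS_compact:
  fixes A :: "'a::euclidean_space set"
  assumes "compact A" "A \<noteq> {}"
  shows "compact (cballS r A)"
proof -
  have cl: "closed (cballS r A)"
    unfolding cballS_def
    by (intro closed_Collect_le continuous_intros)
  obtain M where M: "\<forall>a\<in>A. norm a \<le> M"
    using compact_imp_bounded[OF assms(1)] bounded_iff by blast
  have "\<forall>x\<in>cballS r A. norm x \<le> M + r"
  proof
    fix x assume "x \<in> cballS r A"
    then have xr: "infdist x A \<le> r" by (simp add: cballS_def)
    obtain a where a: "a \<in> A" "infdist x A = dist x a"
      using infdist_attains_inf[OF compact_imp_closed[OF assms(1)] assms(2)] by blast
    have "norm x \<le> norm a + dist x a"
      by (metis dist_norm norm_triangle_sub add.commute)
    then show "norm x \<le> M + r" using M a xr by force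
  qed
  then have "bounded (cballS r A)" using bounded_iff by blast
  then show ?thesis using cl compact_eq_bounded_closed by blast
qed

lemma pos_min:
  fixes f :: "'a::metric_space \<Rightarrow> real"
  assumes "compact K" "continuous_on K f" "\<forall>x\<in>K. f x > 0"
  shows "\<exists>m>0. \<forall>x\<in>K. m \<le> f x"
proof (cases "K = {}")
  case True then show ?thesis by (rule_tac x=1 in exI) auto
next
  case False
  obtain x0 where "x0 \<in> K" "\<forall>x\<in>K. f x0 \<le> f x"
    using compact_attains_inf[OF compact_continuous_image[OF assms(2,1)]] False by auto
  then show ?thesis using assms(3) by blast
qed

lemma bdd_above_cont:
  fixes f :: "'a::metric_space \<Rightarrow> real"
  assumes "compact K" "continuous_on K f"
  shows "\<exists>B. \<forall>x\<in>K. f x \<le> B"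
proof -
  have "bounded (f ` K)" using compact_imp_bounded[OF compact_continuous_image[OF assms(2,1)]] .
  then obtain a where "\<forall>y\<in>f ` K. \<bar>y\<bar> \<le> a" using bounded_real by blast
  then show ?thesis by (rule_tac x=a in exI) force
qed

lemma traj_props:
  fixes Xi :: "'a::euclidean_space set"
  assumes tr: "traj Xi Psi a0 y"
    and desc: "\<forall>y\<in>Xi. V y \<le> B \<longrightarrow> (\<forall>s\<in>Psi y. closest_point Xi (y - a0 *\<^sub>R s) \<in> Xi \<and>
                 V (closest_point Xi (y - a0 *\<^sub>R s)) \<le> V y - a0/2 * gradV V y s)"
    and gpos: "\<forall>y\<in>Xi. \<forall>s\<in>Psi y. gradV V y s \<ge> 0"
    and a0: "a0 > 0"
    and y0: "V (y 0) \<le> B"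
  shows "\<forall>t. y t \<in> Xi \<and> V (y t) \<le> V (y 0) \<and>
            (\<exists>s\<in>Psi (y t). y (Suc t) \<in> Xi \<and> V (y (Suc t)) \<le> V (y t) - a0/2 * gradV V (y t) s)"
proof
  fix t
  show "y t \<in> Xi \<and> V (y t) \<le> V (y 0) \<and>
            (\<exists>s\<in>Psi (y t). y (Suc t) \<in> Xi \<and> V (y (Suc t)) \<le> V (y t) - a0/2 * gradV V (y t) s)"
  proof (induction t)
    case 0
    obtain s where s: "s \<in> Psi (y 0)" "y (Suc 0) = closest_point Xi (y 0 - a0 *\<^sub>R s)"
      using tr unfolding traj_def by blast
    have "y 0 \<in> Xi" using tr traj_def by blast
    then show ?case using desc s y0 by auto
  next
    case (Suc t)
    then obtain s0 where s0: "s0 \<in> Psi (y t)" "y (Suc t) \<in> Xi"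
        "V (y (Suc t)) \<le> V (y t) - a0/2 * gradV V (y t) s0" by blast
    have "gradV V (y t) s0 \<ge> 0" using gpos Suc s0 by blast
    then have "a0/2 * gradV V (y t) s0 \<ge> 0" using a0 by simp
    then have v1: "V (y (Suc t)) \<le> V (y 0)" using s0 Suc by linarith
    obtain s where s: "s \<in> Psi (y (Suc t))" "y (Suc (Suc t)) = closest_point Xi (y (Suc t) - a0 *\<^sub>R s)"
      using tr unfolding traj_def by blast
    have "V (y (Suc t)) \<le> B" using v1 y0 by linarith
    then have "closest_point Xi (y (Suc t) - a0 *\<^sub>R s) \<in> Xi \<and>
       V (closest_point Xi (y (Suc t) - a0 *\<^sub>R s)) \<le> V (y (Suc t)) - a0/2 * gradV V (y (Suc t)) s"
      using desc s0(2) s(1) by blast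
    then show ?case using s s0 v1 by auto
  qed
qed

lemma abstract_SPAS:
  fixes A Xi :: "'a::euclidean_space set" and V :: "'a \<Rightarrow> real"
  assumes cV: "continuous_on UNIV V" and Vnn: "\<forall>y. V y \<ge> 0"
   and ru: "rad_unb_on V A UNIV" and cA: "compact A" and neA: "A \<noteq> {}" and cX: "closed Xi"
   and gpos: "\<forall>y\<in>Xi. \<forall>s\<in>Psi y. gradV V y s \<ge> 0"
   and phiall: "\<exists>eps\<ge>0. \<forall>sigma>eps. \<exists>phi::'a\<Rightarrow>real. continuous_on UNIV phi \<and>
            (\<forall>y\<in>Xi \<inter> (cballS sigma A - ballS eps A). phi y > 0) \<and>
            (\<forall>y\<in>Xi \<inter> (cballS sigma A - ballS eps A). \<forall>s\<in>Psi y. gradV V y s \<ge> phi y)"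
   and desc: "\<forall>B. \<exists>a0>0. \<forall>y\<in>Xi. V y \<le> B \<longrightarrow> (\<forall>s\<in>Psi y. closest_point Xi (y - a0 *\<^sub>R s) \<in> Xi \<and>
                 V (closest_point Xi (y - a0 *\<^sub>R s)) \<le> V y - a0/2 * gradV V y s)"
  shows "SPAS Xi Psi A"
proof -
  obtain eps where eps: "eps \<ge> 0" and phiE: "\<forall>sigma>eps. \<exists>phi::'a\<Rightarrow>real. continuous_on UNIV phi \<and>
            (\<forall>y\<in>Xi \<inter> (cballS sigma A - ballS eps A). phi y > 0) \<and>
            (\<forall>y\<in>Xi \<inter> (cballS sigma A - ballS eps A). \<forall>s\<in>Psi y. gradV V y s \<ge> phi y)"
    using phiall by blast
  define r1 where "r1 = eps + 1"
  have r1: "r1 > eps" "r1 > 0" using eps r1_def by auto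
  obtain c0 where c0: "\<forall>x\<in>cballS r1 A. V x \<le> c0"
    using bdd_above_cont[OF cballS_compact[OF cA neA] continuous_on_subset[OF cV]] by blast
  obtain r where r: "r > 0" "\<forall>x. x \<notin> cballS r A \<longrightarrow> V x > c0"
    using ru unfolding rad_unb_on_def by blast
  have lev: "infdist x A \<le> r" if "V x \<le> c0" for x
    using r(2) that unfolding cballS_def by force
  obtain a1 where a1: "a1 > 0" and d1: "\<forall>y\<in>Xi. V y \<le> c0 \<longrightarrow> (\<forall>s\<in>Psi y. closest_point Xi (y - a1 *\<^sub>R s) \<in> Xi \<and>
                 V (closest_point Xi (y - a1 *\<^sub>R s)) \<le> V y - a1/2 * gradV V y s)"
    using desc by blast
  have stab: "pract_stable Xi Psi A"
    unfolding pract_stable_def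
  proof (rule exI[of _ r], intro conjI allI impI)
    show "0 < r" by fact
    fix rs assume "r < rs"
    show "\<exists>delta>0. \<exists>Ps. Ps \<noteq> {} \<and> Ps \<subseteq> {0<..} \<and>
        (\<forall>alpha\<in>Ps. \<forall>y. traj Xi Psi alpha y \<and> y 0 \<in> cballS delta A \<inter> Xi \<longrightarrow>
            (\<forall>t. y t \<in> cballS rs A \<inter> Xi))"
    proof (rule exI[of _ r1], intro conjI exI[of _ "{a1}"])
      show "0 < r1" by fact
      show "{a1} \<noteq> {}" by simp
      show "{a1} \<subseteq> {0<..}" using a1 by simp
      show "\<forall>alpha\<in>{a1}. \<forall>y. traj Xi Psi alpha y \<and> y 0 \<in> cballS r1 A \<inter> Xi \<longrightarrow>
            (\<forall>t. y t \<in> cballS rs A \<inter> Xi)"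
      proof (intro ballI allI impI)
        fix alpha y t assume al: "alpha \<in> {a1}" and h: "traj Xi Psi alpha y \<and> y 0 \<in> cballS r1 A \<inter> Xi"
        have v0: "V (y 0) \<le> c0" using h c0 by blast
        have tp: "\<forall>t. y t \<in> Xi \<and> V (y t) \<le> V (y 0) \<and>
            (\<exists>s\<in>Psi (y t). y (Suc t) \<in> Xi \<and> V (y (Suc t)) \<le> V (y t) - a1/2 * gradV V (y t) s)"
          by (rule traj_props[of Xi Psi a1 y V c0]) (use h al d1 gpos a1 v0 in auto)
        then have "y t \<in> Xi" "V (y t) \<le> V (y 0)" by blast+
        then have "y t \<in> Xi" "V (y t) \<le> c0" using v0 by linarith+
        then show "y t \<in> cballS rs A \<inter> Xi" using lev[of "y t"] \<open>r < rs\<close> unfolding cballS_def by auto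
      qed
    qed
  qed
  have attr: "semiglob_pract_attractive Xi Psi A"
    unfolding semiglob_pract_attractive_def
  proof (rule exI[of _ r], intro conjI allI impI)
    show "0 < r" by fact
    fix ra sigma assume rs: "r < ra \<and> ra < sigma"
    obtain B where B: "\<forall>x\<in>cballS sigma A. V x \<le> B"
      using bdd_above_cont[OF cballS_compact[OF cA neA] continuous_on_subset[OF cV]] by blast
    obtain rB where rB: "rB > 0" "\<forall>x. x \<notin> cballS rB A \<longrightarrow> V x > B"
      using ru unfolding rad_unb_on_def by blast
    define sg where "sg = max rB r1 + 1"
    have sg: "sg > eps" "rB \<le> sg" using r1 sg_def by auto
    obtain phi where phi: "continuous_on UNIV phi"
         "\<forall>y\<in>Xi \<inter> (cballS sg A - ballS eps A). phi y > 0"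
         "\<forall>y\<in>Xi \<inter> (cballS sg A - ballS eps A). \<forall>s\<in>Psi y. gradV V y s \<ge> phi y"
      using phiE sg(1) by blast
    define K where "K = (Xi \<inter> {x. r1 \<le> infdist x A}) \<inter> cballS sg A"
    have clK: "closed (Xi \<inter> {x. r1 \<le> infdist x A})"
      by (intro closed_Int cX closed_Collect_le continuous_intros)
    have cK: "compact K" unfolding K_def
      by (rule closed_Int_compact[OF clK cballS_compact[OF cA neA]])
    have Ksub: "K \<subseteq> Xi \<inter> (cballS sg A - ballS eps A)"
      using r1 unfolding K_def ballS_def by auto
    obtain m where m: "m > 0" "\<forall>x\<in>K. m \<le> phi x"
      using pos_min[OF cK continuous_on_subset[OF phi(1)]] phi(2) Ksub by blast
    obtain a2 where a2: "a2 > 0" and d2: "\<forall>y\<in>Xi. V y \<le> B \<longrightarrow> (\<forall>s\<in>Psi y. closest_point Xi (y - a2 *\<^sub>R s) \<in> Xi \<and>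
                 V (closest_point Xi (y - a2 *\<^sub>R s)) \<le> V y - a2/2 * gradV V y s)"
      using desc by blast
    show "\<exists>Pa. Pa \<noteq> {} \<and> Pa \<subseteq> {0<..} \<and>
           (\<forall>alpha\<in>Pa. unif_attractive Xi Psi alpha (cballS ra A) (cballS sigma A))"
    proof (intro exI[of _ "{a2}"] conjI)
      show "{a2} \<noteq> {}" by simp
      show "{a2} \<subseteq> {0<..}" using a2 by simp
      show "\<forall>alpha\<in>{a2}. unif_attractive Xi Psi alpha (cballS ra A) (cballS sigma A)"
        unfolding unif_attractive_def
      proof (intro ballI allI impI)
        fix alpha e assume al: "alpha \<in> {a2}" and "0 < e" "cballS e (cballS ra A) \<inter> Xi \<subseteq> cballS sigma A \<inter> Xi"
        define T where "T = nat \<lceil>2 * B / (a2 * m)\<rceil> + 1"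
        show "\<exists>T. \<forall>y. traj Xi Psi alpha y \<and> y 0 \<in> cballS sigma A \<longrightarrow> (\<forall>t\<ge>T. y t \<in> cballS e (cballS ra A))"
        proof (rule exI[of _ T], intro allI impI)
          fix y t assume h: "traj Xi Psi alpha y \<and> y 0 \<in> cballS sigma A" and tT: "T \<le> t"
          have v0: "V (y 0) \<le> B" using h B by blast
          have tp: "\<forall>t. y t \<in> Xi \<and> V (y t) \<le> V (y 0) \<and>
            (\<exists>s\<in>Psi (y t). y (Suc t) \<in> Xi \<and> V (y (Suc t)) \<le> V (y t) - a2/2 * gradV V (y t) s)"
            by (rule traj_props[of Xi Psi a2 y V B]) (use h al d2 gpos a2 v0 in auto)
          have dec: "V (y (Suc t)) \<le> V (y t)" for t
          proof -
            obtain s where s: "s \<in> Psi (y t)" "V (y (Suc t)) \<le> V (y t) - a2/2 * gradV V (y t) s"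
              using tp by blast
            have "gradV V (y t) s \<ge> 0" using gpos tp s by blast
            then have "a2/2 * gradV V (y t) s \<ge> 0" using a2 by simp
            then show ?thesis using s by linarith
          qed
          have ds: "decseq (\<lambda>t. V (y t))" by (rule decseq_SucI) (use dec in auto)
          have inK: "gradV V (y t) s \<ge> m" if "r1 < infdist (y t) A" "s \<in> Psi (y t)" for t s
          proof -
            have "V (y t) \<le> V (y 0)" using tp by blast
            then have "V (y t) \<le> B" using v0 by linarith
            then have "infdist (y t) A \<le> rB" using rB(2) unfolding cballS_def by force
            then have "y t \<in> K" using tp that sg unfolding K_def cballS_def by auto
            then show ?thesis using m Ksub phi(3) that by force
          qed
          have claim: "(\<forall>t<N. r1 < infdist (y t) A) \<longrightarrow> V (y N) \<le> V (y 0) - real N * (a2 * m / 2)" for N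
          proof (induction N)
            case 0 then show ?case by simp
          next
            case (Suc N)
            show ?case
            proof
              assume H: "\<forall>t<Suc N. r1 < infdist (y t) A"
              then have IH: "V (y N) \<le> V (y 0) - real N * (a2 * m / 2)" using Suc by auto
              obtain s where s: "s \<in> Psi (y N)" "V (y (Suc N)) \<le> V (y N) - a2/2 * gradV V (y N) s"
                using tp by blast
              have "gradV V (y N) s \<ge> m" using inK H s by auto
              then have "a2/2 * gradV V (y N) s \<ge> a2/2 * m" using a2 by (simp add: mult_left_mono)
              then show "V (y (Suc N)) \<le> V (y 0) - real (Suc N) * (a2 * m / 2)"
                using IH s by (simp add: algebra_simps add_divide_distrib)
            qed
          qed
          have "\<exists>t0<T. infdist (y t0) A \<le> r1"
          proof (rule ccontr)
            assume "\<not> ?thesis"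
            then have "\<forall>t<T. r1 < infdist (y t) A" by force
            then have vT: "V (y T) \<le> V (y 0) - real T * (a2 * m / 2)" using claim by blast
            have am: "a2 * m > 0" using a2 m by simp
            have "real T \<ge> 2 * B / (a2 * m) + 1" unfolding T_def
              by (simp add: real_nat_ceiling_ge) 
            then have "real T * (a2 * m / 2) \<ge> (2 * B / (a2 * m) + 1) * (a2 * m / 2)"
              using am by (intro mult_right_mono) auto
            also have "(2 * B / (a2 * m) + 1) * (a2 * m / 2) = B + a2 * m / 2"
              using a2 m by (simp add: field_simps)
            finally show False using vT v0 Vnn[rule_format, of "y T"] am by linarith
          qed
          then obtain t0 where t0: "t0 < T" "infdist (y t0) A \<le> r1" by blast
          have "V (y t0) \<le> c0" using c0 t0 unfolding cballS_def by blast
          moreover have "V (y t) \<le> V (y t0)" using decseqD[OF ds, of t0 t] t0 tT by simp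
          ultimately have "infdist (y t) A \<le> r" using lev by force
          then have "y t \<in> cballS ra A" using rs unfolding cballS_def by auto
          then show "y t \<in> cballS e (cballS ra A)" using \<open>0 < e\<close> unfolding cballS_def[of e] by simp
        qed
      qed
    qed
  qed
  show ?thesis unfolding SPAS_def using stab attr by blast
qed



lemma grad_i:
  fixes A :: "'a::euclidean_space set" and V :: "'a \<Rightarrow> real"
  assumes cA: "closed A" "A \<noteq> {}"
    and Vdef: "\<forall>y. V y = 1/2 * (norm (y - closest_point A y))\<^sup>2"
    and dV: "V differentiable (at y)"
  shows "gradV V y h = (y - closest_point A y) \<bullet> h"
proof -
  define D where "D = frechet_derivative V (at y)"
  define w where "w = y - closest_point A y"
  have hD: "(V has_derivative D) (at y)" using dV frechet_derivative_works D_def by blast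
  have lin: "linear D" using has_derivative_linear[OF hD] .
  have c1: "((\<lambda>t::real. y + t *\<^sub>R h) has_derivative (\<lambda>t. t *\<^sub>R h)) (at 0)"
    by (auto intro!: derivative_eq_intros)
  have "((\<lambda>t::real. V (y + t *\<^sub>R h)) has_derivative (\<lambda>t. D (t *\<^sub>R h))) (at 0)"
    using has_derivative_compose[OF c1, of V D] hD by simp
  moreover have "(\<lambda>t. D (t *\<^sub>R h)) = (\<lambda>t. D h * t)"
    using linear_cmul[OF lin] by (auto simp: mult.commute)
  moreover have "(\<lambda>t. D h * t) = (*) (D h)" by auto
  ultimately have d1: "((\<lambda>t::real. V (y + t *\<^sub>R h)) has_field_derivative D h) (at 0)"
    unfolding has_field_derivative_def by metis
  define f where "f = (\<lambda>t::real. V (y + t *\<^sub>R h) - t * (w \<bullet> h) - t^2/2 * (h \<bullet> h))"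
  have df: "(f has_field_derivative (D h - w \<bullet> h)) (at 0)"
    unfolding f_def
    by (rule derivative_eq_intros d1 refl | simp)+
  have le: "f t \<le> f 0" for t
  proof -
    have "closest_point A y \<in> A" using closest_point_in_set[OF cA] .
    then have "dist (y + t *\<^sub>R h) (closest_point A (y + t *\<^sub>R h)) \<le> dist (y + t *\<^sub>R h) (closest_point A y)"
      using closest_point_le[OF cA(1)] by blast
    then have "norm (y + t *\<^sub>R h - closest_point A (y + t *\<^sub>R h)) \<le> norm (w + t *\<^sub>R h)"
      by (simp add: dist_norm w_def algebra_simps)
    then have "(norm (y + t *\<^sub>R h - closest_point A (y + t *\<^sub>R h)))\<^sup>2 \<le> (norm (w + t *\<^sub>R h))\<^sup>2"
      by (simp add: power_mono)
    also have "(norm (w + t *\<^sub>R h))\<^sup>2 = (norm w)\<^sup>2 + 2 * t * (w \<bullet> h) + t^2 * (h \<bullet> h)"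
      unfolding power2_norm_eq_inner by (simp add: inner_add_left inner_add_right inner_commute algebra_simps power2_eq_square)
    finally have *: "(norm (y + t *\<^sub>R h - closest_point A (y + t *\<^sub>R h)))\<^sup>2 \<le> (norm w)\<^sup>2 + 2 * t * (w \<bullet> h) + t^2 * (h \<bullet> h)" .
    have "V (y + t *\<^sub>R h) = 1/2 * (norm (y + t *\<^sub>R h - closest_point A (y + t *\<^sub>R h)))\<^sup>2" using Vdef by blast
    moreover have "V y = 1/2 * (norm w)\<^sup>2" using Vdef w_def by blast
    ultimately show ?thesis unfolding f_def using * by simp
  qed
  have "D h - w \<bullet> h = 0"
    by (rule DERIV_local_max[OF df, of 1]) (use le in auto)
  then show ?thesis unfolding gradV_def D_def w_def by simp
qed

lemma desc_i:
  fixes A Xi :: "'a::euclidean_space set" and V :: "'a \<Rightarrow> real"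
  assumes cX: "closed Xi" "convex Xi" "Xi \<noteq> {}"
    and cA: "closed A" "A \<noteq> {}" and AX: "A \<subseteq> Xi"
    and Vdef: "\<forall>y. V y = 1/2 * (norm (y - closest_point A y))\<^sup>2"
    and dV: "\<forall>y. V differentiable (at y)"
    and beta: "beta > 0" "\<forall>y\<in>Xi. \<forall>s\<in>Psi y. (norm s)\<^sup>2 \<le> beta * gradV V y s"
  shows "\<exists>a0>0. \<forall>y\<in>Xi. V y \<le> B \<longrightarrow> (\<forall>s\<in>Psi y. closest_point Xi (y - a0 *\<^sub>R s) \<in> Xi \<and>
                 V (closest_point Xi (y - a0 *\<^sub>R s)) \<le> V y - a0/2 * gradV V y s)"
proof (intro exI[of _ "1/beta"] conjI ballI impI)
  show "0 < 1/beta" using beta by simp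
  fix y s assume y: "y \<in> Xi" and s: "s \<in> Psi y"
  define a where "a = 1/beta"
  define z where "z = y - a *\<^sub>R s"
  define yp where "yp = closest_point Xi z"
  define w where "w = y - closest_point A y"
  show "closest_point Xi (y - (1/beta) *\<^sub>R s) \<in> Xi" using closest_point_in_set[OF cX(1,3)] .
  have g: "gradV V y s = w \<bullet> s" using grad_i[OF cA Vdef dV[rule_format]] w_def by blast
  have pA: "closest_point A z \<in> A" using closest_point_in_set[OF cA] .
  have "dist yp (closest_point A yp) \<le> dist yp (closest_point A z)"
    using closest_point_le[OF cA(1) pA] .
  also have "dist yp (closest_point A z) = dist (closest_point Xi z) (closest_point Xi (closest_point A z))"
    using closest_point_self[of "closest_point A z" Xi] pA AX yp_def by auto
  also have "\<dots> \<le> dist z (closest_point A z)" using closest_point_lipschitz[OF cX(2,1,3)] .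
  also have "\<dots> \<le> dist z (closest_point A y)" using closest_point_le[OF cA(1) closest_point_in_set[OF cA]] .
  also have "dist z (closest_point A y) = norm (w - a *\<^sub>R s)" unfolding z_def w_def dist_norm by (simp add: algebra_simps)
  finally have n1: "norm (yp - closest_point A yp) \<le> norm (w - a *\<^sub>R s)" by (simp add: dist_norm)
  have "(norm (yp - closest_point A yp))\<^sup>2 \<le> (norm (w - a *\<^sub>R s))\<^sup>2" using n1 by (simp add: power_mono)
  also have "(norm (w - a *\<^sub>R s))\<^sup>2 = (norm w)\<^sup>2 - 2 * a * (w \<bullet> s) + a^2 * (norm s)\<^sup>2"
    unfolding power2_norm_eq_inner by (simp add: inner_diff_left inner_diff_right inner_commute algebra_simps power2_eq_square)
  finally have n2: "(norm (yp - closest_point A yp))\<^sup>2 \<le> (norm w)\<^sup>2 - 2 * a * (w \<bullet> s) + a^2 * (norm s)\<^sup>2" .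
  have "(norm s)\<^sup>2 \<le> beta * (w \<bullet> s)" using beta(2) y s g by metis
  then have "a^2 * (norm s)\<^sup>2 \<le> a^2 * (beta * (w \<bullet> s))" by (rule mult_left_mono) simp
  also have "a^2 * (beta * (w \<bullet> s)) = a * (w \<bullet> s)" using beta(1) unfolding a_def by (simp add: power2_eq_square)
  finally have n3: "a^2 * (norm s)\<^sup>2 \<le> a * (w \<bullet> s)" .
  have "V yp = 1/2 * (norm (yp - closest_point A yp))\<^sup>2" using Vdef by blast
  moreover have "V y = 1/2 * (norm w)\<^sup>2" using Vdef w_def by blast
  ultimately have "V yp \<le> V y - a/2 * (w \<bullet> s)" using n2 n3 by simp
  then show "V (closest_point Xi (y - (1/beta) *\<^sub>R s)) \<le> V y - (1/beta)/2 * gradV V y s"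
    using g unfolding yp_def z_def a_def by simp
qed



lemma desc_ii:
  fixes A :: "'a::euclidean_space set" and V :: "'a \<Rightarrow> real" and g :: "'a \<Rightarrow> 'a"
  assumes cA: "compact A" "A \<noteq> {}"
    and gd: "\<forall>y. (V has_derivative (\<lambda>h. g y \<bullet> h)) (at y)"
    and gc: "continuous_on UNIV g"
    and gl: "\<forall>x. \<exists>U L. open U \<and> x \<in> U \<and> L-lipschitz_on U g"
    and ru: "rad_unb_on V A UNIV"
    and beta: "beta > 0" "\<forall>y\<in>(UNIV::'a set). \<forall>s\<in>Psi y. (norm s)\<^sup>2 \<le> beta * gradV V y s"
  shows "\<exists>a0>0. \<forall>y\<in>(UNIV::'a set). V y \<le> B \<longrightarrow> (\<forall>s\<in>Psi y. closest_point UNIV (y - a0 *\<^sub>R s) \<in> UNIV \<and>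
                 V (closest_point UNIV (y - a0 *\<^sub>R s)) \<le> V y - a0/2 * gradV V y s)"
proof -
  have grad: "gradV V y s = g y \<bullet> s" for y s
    using frechet_derivative_at[OF gd[rule_format, of y]] unfolding gradV_def by metis
  have cV: "continuous_on UNIV V"
    by (rule has_derivative_continuous_on[of UNIV V "\<lambda>y h. g y \<bullet> h"]) (use gd in simp)
  obtain r where r: "r > 0" "\<forall>x. x \<notin> cballS r A \<longrightarrow> V x > B"
    using ru unfolding rad_unb_on_def by blast
  define K where "K = {x. V x \<le> B}"
  have KS: "K = cballS r A \<inter> K" using r unfolding K_def by force
  have clK: "closed K" unfolding K_def by (intro closed_Collect_le cV continuous_on_const)
  have cK: "compact K" using KS compact_Int_closed[OF cballS_compact[OF cA] clK] by metis
  obtain R0 where R0: "\<forall>x\<in>K. norm x \<le> R0" using compact_imp_bounded[OF cK] bounded_iff by blast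
  obtain G0 where G0: "\<forall>x\<in>K. norm (g x) \<le> G0"
    using bdd_above_cont[OF cK continuous_on_norm[OF continuous_on_subset[OF gc]]] by blast
  define R where "R = max R0 0"
  define G where "G = max G0 0"
  have RG: "R \<ge> 0" "G \<ge> 0" "\<forall>x\<in>K. norm x \<le> R" "\<forall>x\<in>K. norm (g x) \<le> G"
    using R0 G0 unfolding R_def G_def by force+
  define K2 where "K2 = cball (0::'a) (R + beta * G)"
  have ll: "local_lipschitz {0::real} K2 (\<lambda>t. g)"
    unfolding local_lipschitz_def
  proof (intro ballI)
    fix x t assume "x \<in> K2" "t \<in> {0::real}"
    obtain U L where U: "open U" "x \<in> U" "L-lipschitz_on U g" using gl by blast
    obtain u where u: "u > 0" "cball x u \<subseteq> U" using U open_contains_cball by blast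
    have "L-lipschitz_on (cball x u \<inter> K2) g"
      by (rule lipschitz_on_mono[OF U(3)]) (use u in auto)
    then show "\<exists>u>0. \<exists>L. \<forall>t\<in>cball t u \<inter> {0}. L-lipschitz_on (cball x u \<inter> K2) g"
      using u by blast
  qed
  obtain L0 where L0: "L0-lipschitz_on K2 g"
    using local_lipschitz_compact_implies_lipschitz[of "{0::real}" K2 "\<lambda>t. g"] ll
    unfolding K2_def by auto
  define L where "L = L0 + 1"
  have L: "L > 0" "L-lipschitz_on K2 g"
    using L0 lipschitz_on_nonneg[OF L0] lipschitz_on_mono[OF L0, of K2 L] unfolding L_def by auto
  define a0 where "a0 = min 1 (1 / (2 * L * beta))"
  have a0: "a0 > 0" "a0 \<le> 1" "a0 * L * beta \<le> 1/2"
  proof -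
    show "a0 > 0" "a0 \<le> 1" using L beta unfolding a0_def by auto
    have "a0 \<le> 1 / (2 * L * beta)" unfolding a0_def by simp
    then have "a0 * (L * beta) \<le> 1 / (2 * L * beta) * (L * beta)"
      using L beta by (intro mult_right_mono) auto
    also have "\<dots> = 1/2" using L beta by (simp add: field_simps)
    finally show "a0 * L * beta \<le> 1/2" by (simp add: mult.assoc)
  qed
  show ?thesis
  proof (intro exI[of _ a0] conjI ballI impI)
    show "0 < a0" by fact
    fix y s assume yB: "V y \<le> B" and s: "s \<in> Psi y"
    show "closest_point UNIV (y - a0 *\<^sub>R s) \<in> UNIV" by simp
    have cp: "closest_point UNIV (y - a0 *\<^sub>R s) = y - a0 *\<^sub>R s" by (rule closest_point_self) simp
    have yK: "y \<in> K" using yB K_def by simp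
    define gs where "gs = g y \<bullet> s"
    have ns: "(norm s)\<^sup>2 \<le> beta * gs" using beta(2) s unfolding grad gs_def by blast
    have "0 \<le> (norm s)\<^sup>2" by simp
    then have "0 \<le> beta * gs" using ns by linarith
    then have gs0: "gs \<ge> 0" using beta(1) by (simp add: zero_le_mult_iff)
    have "gs \<le> norm (g y) * norm s" unfolding gs_def by (rule norm_cauchy_schwarz)
    also have "\<dots> \<le> G * norm s" using RG yK by (simp add: mult_right_mono)
    finally have "beta * gs \<le> beta * (G * norm s)" using beta(1) by simp
    then have nsq: "norm s * norm s \<le> (beta * G) * norm s" using ns by (simp add: power2_eq_square mult.assoc)
    have sb: "norm s \<le> beta * G"
    proof (cases "norm s = 0")
      case True then show ?thesis using RG beta by simp
    next
      case False
      then have "norm s > 0" by simp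
      then show ?thesis using nsq by (rule_tac mult_right_le_imp_le[of _ "norm s"]) auto
    qed
    define v where "v = a0 *\<^sub>R s"
    define p where "p = (\<lambda>t::real. y - t *\<^sub>R v)"
    have pK: "p t \<in> K2" if "0 \<le> t" "t \<le> 1" for t
    proof -
      have "norm (p t) \<le> norm y + norm (t *\<^sub>R v)" unfolding p_def by (rule norm_triangle_ineq4)
      also have "norm (t *\<^sub>R v) = t * a0 * norm s" using that a0 unfolding v_def by simp
      also have "t * a0 * norm s \<le> 1 * 1 * norm s" using that a0
        by (intro mult_right_mono mult_mono) auto
      finally show ?thesis using RG yK sb unfolding K2_def by auto
    qed
    have der: "((\<lambda>t. V (p t)) has_derivative (\<lambda>d. g (p t) \<bullet> (- (d *\<^sub>R v)))) (at t within {0..1})" for t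
    proof -
      have c1: "(p has_derivative (\<lambda>d. - (d *\<^sub>R v))) (at t within {0..1})"
        unfolding p_def by (auto intro!: derivative_eq_intros)
      show ?thesis using has_derivative_compose[OF c1 gd[rule_format, of "p t"]] .
    qed
    obtain x where x: "x \<in> {0..1}" "V (p 1) - V (p 0) = g (p x) \<bullet> (- ((1 - 0) *\<^sub>R v))"
      using mvt_very_simple[of 0 1 "\<lambda>t. V (p t)" "\<lambda>t d. g (p t) \<bullet> (- (d *\<^sub>R v))"] der by auto
    have p0: "p 0 = y" "p 1 = y - a0 *\<^sub>R s" unfolding p_def v_def by auto
    have eq: "V (y - a0 *\<^sub>R s) - V y = - a0 * gs + a0 * ((g y - g (p x)) \<bullet> s)"
      using x(2) p0 unfolding gs_def v_def by (simp add: inner_diff_left algebra_simps)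
    have "(g y - g (p x)) \<bullet> s \<le> norm (g y - g (p x)) * norm s" by (rule norm_cauchy_schwarz)
    also have "norm (g y - g (p x)) \<le> L * norm (y - p x)"
      using lipschitz_on_normD[OF L(2) pK[of 0] pK[of x]] x(1) p0 by auto
    also have "norm (y - p x) = x * a0 * norm s" using x(1) a0 unfolding p_def v_def by simp
    also have "x * a0 * norm s \<le> a0 * norm s" using x(1) a0 by (simp add: mult_left_le_one_le)
    finally have "(g y - g (p x)) \<bullet> s \<le> L * (a0 * norm s) * norm s"
      using L by (smt (verit, best) mult_left_mono mult_right_mono norm_ge_zero)
    also have "\<dots> = (a0 * L) * (norm s)\<^sup>2" by (simp add: power2_eq_square algebra_simps)
    also have "\<dots> \<le> (a0 * L) * (beta * gs)" using ns a0 L by (intro mult_left_mono) auto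
    also have "\<dots> = (a0 * L * beta) * gs" by simp
    also have "\<dots> \<le> 1/2 * gs" using a0(3) gs0 by (intro mult_right_mono) auto
    finally have "a0 * ((g y - g (p x)) \<bullet> s) \<le> a0 * (1/2 * gs)" using a0 by (intro mult_left_mono) auto
    then show "V (closest_point UNIV (y - a0 *\<^sub>R s)) \<le> V y - a0/2 * gradV V y s"
      using eq cp grad[of y s] gs_def by simp
  qed
qed


theorem theorem1:
  fixes A Xi :: "'a::euclidean_space set"
    and V :: "'a \<Rightarrow> real"
    and Psi :: "'a \<Rightarrow> 'a set"
  assumes "compact A" and "A \<noteq> {}"
    and "\<forall>y. V y \<ge> 0"
    and "(Xi \<noteq> {} \<and> closed Xi \<and> convex Xi \<and> convex A \<and>
           (\<forall>y. V y = 1/2 * (norm (y - closest_point A y))\<^sup>2))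
       \<or> (Xi = UNIV \<and>
           (\<exists>g :: 'a \<Rightarrow> 'a. (\<forall>y. (V has_derivative (\<lambda>h. g y \<bullet> h)) (at y)) \<and>
              continuous_on UNIV g \<and>
              (\<forall>x. \<exists>U L. open U \<and> x \<in> U \<and> L-lipschitz_on U g)) \<and>
           pos_def_wrt V A \<and> rad_unb_on V A UNIV)"
    and "SPSP Psi V Xi A"
    and "\<exists>beta>0. \<forall>y\<in>Xi. \<forall>s\<in>Psi y. (norm s)\<^sup>2 \<le> beta * gradV V y s"
  shows "SPAS Xi Psi A"
proof -
  note sp = assms(5)[unfolded SPSP_def]
  have dV: "\<forall>y. V differentiable (at y)" using sp by blast
  have ru: "rad_unb_on V A UNIV" using sp by blast
  have AX: "A \<subseteq> Xi"
  proof
    fix a assume "a \<in> A"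
    then obtain e where "e > 0" "ball a e \<subseteq> Xi" using sp by blast
    then show "a \<in> Xi" by auto
  qed
  have cV: "continuous_on UNIV V"
    by (rule differentiable_imp_continuous_on) (use dV differentiable_at_imp_differentiable_on in blast)
  obtain beta where beta: "beta > 0" "\<forall>y\<in>Xi. \<forall>s\<in>Psi y. (norm s)\<^sup>2 \<le> beta * gradV V y s"
    using assms(6) by blast
  have gpos: "\<forall>y\<in>Xi. \<forall>s\<in>Psi y. gradV V y s \<ge> 0"
  proof (intro ballI)
    fix y s assume "y \<in> Xi" "s \<in> Psi y"
    then have "(norm s)\<^sup>2 \<le> beta * gradV V y s" using beta by blast
    moreover have "0 \<le> (norm s)\<^sup>2" by simp
    ultimately have "0 \<le> beta * gradV V y s" by linarith
    then show "gradV V y s \<ge> 0" using beta(1) by (simp add: zero_le_mult_iff)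
  qed
  have phiall: "\<exists>eps\<ge>0. \<forall>sigma>eps. \<exists>phi::'a\<Rightarrow>real. continuous_on UNIV phi \<and>
            (\<forall>y\<in>Xi \<inter> (cballS sigma A - ballS eps A). phi y > 0) \<and>
            (\<forall>y\<in>Xi \<inter> (cballS sigma A - ballS eps A). \<forall>s\<in>Psi y. gradV V y s \<ge> phi y)"
    using sp by metis
  show ?thesis
    using assms(4)
  proof
    assume c1: "Xi \<noteq> {} \<and> closed Xi \<and> convex Xi \<and> convex A \<and>
           (\<forall>y. V y = 1/2 * (norm (y - closest_point A y))\<^sup>2)"
    have desc: "\<forall>B. \<exists>a0>0. \<forall>y\<in>Xi. V y \<le> B \<longrightarrow> (\<forall>s\<in>Psi y. closest_point Xi (y - a0 *\<^sub>R s) \<in> Xi \<and>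
                 V (closest_point Xi (y - a0 *\<^sub>R s)) \<le> V y - a0/2 * gradV V y s)"
      using desc_i[of Xi A V beta Psi] c1 compact_imp_closed[OF assms(1)] assms(2) AX dV beta by blast
    show ?thesis
      by (rule abstract_SPAS[OF cV assms(3) ru assms(1,2) _ gpos phiall desc]) (use c1 in blast)
  next
    assume c2: "Xi = UNIV \<and>
           (\<exists>g :: 'a \<Rightarrow> 'a. (\<forall>y. (V has_derivative (\<lambda>h. g y \<bullet> h)) (at y)) \<and>
              continuous_on UNIV g \<and>
              (\<forall>x. \<exists>U L. open U \<and> x \<in> U \<and> L-lipschitz_on U g)) \<and>
           pos_def_wrt V A \<and> rad_unb_on V A UNIV"
    then have XU: "Xi = UNIV" by blast
    obtain g :: "'a \<Rightarrow> 'a" where g: "\<forall>y. (V has_derivative (\<lambda>h. g y \<bullet> h)) (at y)"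
        "continuous_on UNIV g" "\<forall>x. \<exists>U L. open U \<and> x \<in> U \<and> L-lipschitz_on U g"
      using c2 by blast
    have desc: "\<forall>B. \<exists>a0>0. \<forall>y\<in>Xi. V y \<le> B \<longrightarrow> (\<forall>s\<in>Psi y. closest_point Xi (y - a0 *\<^sub>R s) \<in> Xi \<and>
                 V (closest_point Xi (y - a0 *\<^sub>R s)) \<le> V y - a0/2 * gradV V y s)"
      unfolding XU using desc_ii[OF assms(1,2) g ru beta(1)] beta(2) XU by blast
    show ?thesis
      by (rule abstract_SPAS[OF cV assms(3) ru assms(1,2) _ gpos phiall desc]) (simp add: XU)
  qed
qed

end
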